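(* Let $\Omega,\Omega'$ be finite words in the letters $\{R_j,T_j:j\ge1\}$. Then $\Phi_\Omega=\Phi_{\Omega'}$ as endomorphisms of $\mathbb Z[x_1,x_2,\dots]$ if and only if $\Omega$ and $\Omega'$ have the same image in the augmented Thompson monoid $\widetilde{\mathrm{Th}}$.
   Context: Operators on $\mathbb Z[x_1,x_2,\dots]$: $R_if=f(x_1,\dots,x_{i-1},0,x_i,x_{i+1},\dots)$ and $T_if=\frac1{x_i}(R_{i+1}f-R_if)$. For a word $\Omega=X_1\cdots X_k$, $\Phi_\Omega=\mathrm{op}(X_1)\circ\cdots\circ\mathrm{op}(X_k)$ where letter $R_j$ maps to the operator $R_j$ and $T_j$ to $T_j$ (empty word gives the identity). The augmented Thompson monoid $\widetilde{\mathrm{Th}}$ is the quotient of the free monoid on letters $\{T_j,R_j:j\ge1\}$ by the relations $T_iT_j=T_jT_{i+1}$ for $i>j$; $T_iR_j=R_jT_{i+1}$ for $i\ge j$; $R_iT_j=T_jR_{i+1}$ for $i>j$; $R_iR_j=R_jR_{i+1}$ for $i\ge j$. *)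

theory Defs
  imports Main "HOL-Library.Poly_Mapping"
begin

text \<open>Z[x_1,x_2,...]: finitely supported maps from monomials (finitely supported
  exponent vectors) to integer coefficients. The internal variable index k
  represents the paper's variable x_(k+1).\<close>
type_synonym mpoly = "(nat \<Rightarrow>\<^sub>0 nat) \<Rightarrow>\<^sub>0 int"

definition xvar :: "nat \<Rightarrow> mpoly" where
  "xvar i = Poly_Mapping.single (Poly_Mapping.single (i - 1) 1) 1"

definition subst :: "(nat \<Rightarrow> mpoly) \<Rightarrow> mpoly \<Rightarrow> mpoly" where
  "subst s f = (\<Sum>mo\<in>Poly_Mapping.keys f. of_int (Poly_Mapping.lookup f mo) *
                  (\<Prod>k\<in>Poly_Mapping.keys mo. s k ^ Poly_Mapping.lookup mo k))"

text \<open>R_i f = f(x_1,...,x_(i-1),0,x_i,x_(i+1),...): the paper's x_j is replaced by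
  x_j for j < i, by 0 for j = i, and by x_(j-1) for j > i.\<close>
definition Rop :: "nat \<Rightarrow> mpoly \<Rightarrow> mpoly" where
  "Rop i f = subst (\<lambda>k. if k + 1 < i then xvar (k + 1)
                        else if k + 1 = i then 0
                        else xvar k) f"

text \<open>T_i f = (R_(i+1) f - R_i f) / x_i (exact division in the domain Z[x]).\<close>
definition Top :: "nat \<Rightarrow> mpoly \<Rightarrow> mpoly" where
  "Top i f = (THE g. xvar i * g = Rop (i + 1) f - Rop i f)"

datatype letter = LR nat | LT nat

fun idx :: "letter \<Rightarrow> nat" where
  "idx (LR j) = j" | "idx (LT j) = j"

fun opl :: "letter \<Rightarrow> mpoly \<Rightarrow> mpoly" where
  "opl (LR j) = Rop j" | "opl (LT j) = Top j"

definition Phi :: "letter list \<Rightarrow> mpoly \<Rightarrow> mpoly" where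
  "Phi w = foldr (\<lambda>X F. opl X \<circ> F) w id"

definition valid_word :: "letter list \<Rightarrow> bool" where
  "valid_word w \<longleftrightarrow> (\<forall>X\<in>set w. 1 \<le> idx X)"

inductive th_step :: "letter list \<Rightarrow> letter list \<Rightarrow> bool" where
  TT: "\<lbrakk>1 \<le> j; j < i\<rbrakk> \<Longrightarrow> th_step (u @ [LT i, LT j] @ v) (u @ [LT j, LT (i + 1)] @ v)"
| TR: "\<lbrakk>1 \<le> j; j \<le> i\<rbrakk> \<Longrightarrow> th_step (u @ [LT i, LR j] @ v) (u @ [LR j, LT (i + 1)] @ v)"
| RT: "\<lbrakk>1 \<le> j; j < i\<rbrakk> \<Longrightarrow> th_step (u @ [LR i, LT j] @ v) (u @ [LT j, LR (i + 1)] @ v)"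
| RR: "\<lbrakk>1 \<le> j; j \<le> i\<rbrakk> \<Longrightarrow> th_step (u @ [LR i, LR j] @ v) (u @ [LR j, LR (i + 1)] @ v)"

definition th_equiv :: "letter list \<Rightarrow> letter list \<Rightarrow> bool" where
  "th_equiv = (symclp th_step)\<^sup>*\<^sup>*"

end

theory Submission
  imports Defs
begin

type_synonym ex = "nat \<Rightarrow>\<^sub>0 nat"

lemma lookup_Abs_fin:
  assumes "finite S" "\<And>q. f q \<noteq> 0 \<Longrightarrow> q \<in> S"
  shows "Poly_Mapping.lookup (Abs_poly_mapping f) = f"
proof (rule lookup_Abs_poly_mapping)
  show "finite {x. f x \<noteq> 0}" using assms by (metis (mono_tags) finite_subset mem_Collect_eq subsetI)
qed

definition SS :: "nat \<Rightarrow> ex \<Rightarrow> nat set" where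
  "SS p a = Poly_Mapping.keys a \<union> Suc ` Poly_Mapping.keys a \<union> (\<lambda>k. k - 1) ` Poly_Mapping.keys a \<union> {p, Suc p}"

lemma finite_SS: "finite (SS p a)" by (simp add: SS_def)

lemma in_SS1: "Poly_Mapping.lookup a q \<noteq> 0 \<Longrightarrow> q \<in> SS p a"
  unfolding SS_def by (simp add: in_keys_iff)
lemma in_SS2: "Poly_Mapping.lookup a (Suc q) \<noteq> 0 \<Longrightarrow> q \<in> SS p a"
  unfolding SS_def by (rule UnI1, rule UnI2) (force simp: in_keys_iff image_iff)
lemma in_SS3: "Poly_Mapping.lookup a (q - 1) \<noteq> 0 \<Longrightarrow> q \<noteq> 0 \<Longrightarrow> q \<in> SS p a"
  unfolding SS_def by (rule UnI1, rule UnI1, rule UnI2) (force simp: in_keys_iff image_iff)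
lemma in_SS4: "q = p \<Longrightarrow> q \<in> SS p a" "q = Suc p \<Longrightarrow> q \<in> SS p a"
  unfolding SS_def by auto
lemmas in_SS = in_SS1 in_SS2 in_SS3 in_SS4

definition dl :: "nat \<Rightarrow> ex \<Rightarrow> ex" where
  "dl p a = Abs_poly_mapping (\<lambda>q. if q < p then Poly_Mapping.lookup a q else Poly_Mapping.lookup a (Suc q))"
definition mg :: "nat \<Rightarrow> ex \<Rightarrow> ex" where
  "mg p a = Abs_poly_mapping (\<lambda>q. if q < p then Poly_Mapping.lookup a q else if q = p then Poly_Mapping.lookup a p + Poly_Mapping.lookup a (Suc p) - 1 else Poly_Mapping.lookup a (Suc q))"
definition iz :: "nat \<Rightarrow> ex \<Rightarrow> ex" where
  "iz p a = Abs_poly_mapping (\<lambda>q. if q < p then Poly_Mapping.lookup a q else if q = p then 0 else Poly_Mapping.lookup a (q - 1))"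
definition sL :: "nat \<Rightarrow> ex \<Rightarrow> ex" where
  "sL p a = Abs_poly_mapping (\<lambda>q. if q < p then Poly_Mapping.lookup a q else if q = p then Poly_Mapping.lookup a p + 1 else if q = Suc p then 0 else Poly_Mapping.lookup a (q - 1))"
definition sR :: "nat \<Rightarrow> ex \<Rightarrow> ex" where
  "sR p a = Abs_poly_mapping (\<lambda>q. if q < p then Poly_Mapping.lookup a q else if q = p then 0 else if q = Suc p then Poly_Mapping.lookup a p + 1 else Poly_Mapping.lookup a (q - 1))"

lemma lookup_dl [simp]: "Poly_Mapping.lookup (dl p a) q = (if q < p then Poly_Mapping.lookup a q else Poly_Mapping.lookup a (Suc q))"
  unfolding dl_def by (subst lookup_Abs_fin[OF finite_SS[of p a]]) (auto intro: in_SS split: if_splits)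
lemma lookup_mg [simp]: "Poly_Mapping.lookup (mg p a) q = (if q < p then Poly_Mapping.lookup a q else if q = p then Poly_Mapping.lookup a p + Poly_Mapping.lookup a (Suc p) - 1 else Poly_Mapping.lookup a (Suc q))"
  unfolding mg_def by (subst lookup_Abs_fin[OF finite_SS[of p a]]) (auto intro: in_SS split: if_splits)
lemma lookup_iz [simp]: "Poly_Mapping.lookup (iz p a) q = (if q < p then Poly_Mapping.lookup a q else if q = p then 0 else Poly_Mapping.lookup a (q - 1))"
  unfolding iz_def by (subst lookup_Abs_fin[OF finite_SS[of p a]]) (auto intro: in_SS split: if_splits)
lemma lookup_sL [simp]: "Poly_Mapping.lookup (sL p a) q = (if q < p then Poly_Mapping.lookup a q else if q = p then Poly_Mapping.lookup a p + 1 else if q = Suc p then 0 else Poly_Mapping.lookup a (q - 1))"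
  unfolding sL_def by (subst lookup_Abs_fin[OF finite_SS[of p a]]) (auto intro: in_SS split: if_splits)
lemma lookup_sR [simp]: "Poly_Mapping.lookup (sR p a) q = (if q < p then Poly_Mapping.lookup a q else if q = p then 0 else if q = Suc p then Poly_Mapping.lookup a p + 1 else Poly_Mapping.lookup a (q - 1))"
  unfolding sR_def by (subst lookup_Abs_fin[OF finite_SS[of p a]]) (auto intro: in_SS split: if_splits)

definition lin :: "(mpoly \<Rightarrow> mpoly) \<Rightarrow> bool" where
  "lin F \<longleftrightarrow> (\<forall>f. F f = frag_extend (\<lambda>a. F (frag_of a)) f)"

lemma linD: "lin F \<Longrightarrow> F f = frag_extend (\<lambda>a. F (frag_of a)) f"
  unfolding lin_def by blast

lemma frag_extend_compose2:
  "frag_extend g (frag_extend h c) = frag_extend (\<lambda>x. frag_extend g (h x)) c"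
  using subset_UNIV
  by (induction c rule: frag_induction) (auto simp: frag_extend_diff)

lemma lin_frag_extend: "lin (frag_extend h)"
  unfolding lin_def by simp

lemma lin_id: "lin id"
  unfolding lin_def
proof
  fix f :: mpoly
  show "id f = frag_extend (\<lambda>a. id (frag_of a)) f"
    using frag_expansion[of f] by simp
qed

lemma lin_comp: assumes "lin F" "lin G" shows "lin (F \<circ> G)"
  unfolding lin_def
proof
  fix f
  have "F (G f) = frag_extend (\<lambda>a. F (frag_of a)) (frag_extend (\<lambda>a. G (frag_of a)) f)"
    using linD[OF assms(1), of "G f"] linD[OF assms(2), of f] by simp
  also have "\<dots> = frag_extend (\<lambda>x. frag_extend (\<lambda>a. F (frag_of a)) (G (frag_of x))) f"
    by (rule frag_extend_compose2)
  also have "\<dots> = frag_extend (\<lambda>x. F (G (frag_of x))) f"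
    using linD[OF assms(1)] by (intro frag_extend_eq) (metis)
  finally show "(F \<circ> G) f = frag_extend (\<lambda>a. (F \<circ> G) (frag_of a)) f" by simp
qed

lemma lin_zero: assumes "lin F" shows "F 0 = 0"
  using linD[OF assms, of 0] by simp
lemma lin_diff: assumes "lin F" shows "F (a - b) = F a - F b"
proof -
  have "F (a - b) = frag_extend (\<lambda>a. F (frag_of a)) (a - b)" by (rule linD[OF assms])
  also have "\<dots> = frag_extend (\<lambda>a. F (frag_of a)) a - frag_extend (\<lambda>a. F (frag_of a)) b"
    by (rule frag_extend_diff)
  finally show ?thesis using linD[OF assms, of a] linD[OF assms, of b] by simp
qed
lemma lin_cmul: assumes "lin F" shows "F (frag_cmul c a) = frag_cmul c (F a)"
proof -
  have "F (frag_cmul c a) = frag_extend (\<lambda>a. F (frag_of a)) (frag_cmul c a)" by (rule linD[OF assms])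
  also have "\<dots> = frag_cmul c (frag_extend (\<lambda>a. F (frag_of a)) a)"
    by (rule frag_extend_cmul)
  finally show ?thesis using linD[OF assms, of a] by simp
qed
lemma lin_eqI: assumes "lin F" "lin G" "\<And>a. F (frag_of a) = G (frag_of a)" shows "F = G"
proof
  fix f
  show "F f = G f" using linD[OF assms(1), of f] linD[OF assms(2), of f] assms(3) by simp
qed

lemma of_int_mult_cmul: "(of_int c :: mpoly) * P = frag_cmul c P"
proof -
  have "(of_int c :: mpoly) = Poly_Mapping.single 0 (of_int c)" by (rule single_of_int[symmetric])
  then have "(of_int c :: mpoly) = Poly_Mapping.single 0 c" by simp
  then have "(of_int c :: mpoly) * P = Poly_Mapping.map ((*) c) P"
    by (simp add: mult_map_scale_conv_mult)
  then show ?thesis by (auto intro!: poly_mapping_eqI simp: Poly_Mapping.map.rep_eq when_def)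
qed

lemma subst_fe: "subst s f = frag_extend (\<lambda>a. subst s (frag_of a)) f"
  unfolding subst_def frag_extend_def by (simp add: of_int_mult_cmul)

lemma lin_subst: "lin (subst s)"
  unfolding lin_def using subst_fe by blast

definition Xv :: "nat \<Rightarrow> mpoly" where "Xv q = Poly_Mapping.single (Poly_Mapping.single q 1) 1"

lemma Xv_pow: "Xv q ^ n = Poly_Mapping.single (Poly_Mapping.single q n) 1"
proof (induction n)
  case 0 then show ?case by simp
next
  case (Suc n)
  have "Xv q ^ Suc n = Xv q * Poly_Mapping.single (Poly_Mapping.single q n) 1" using Suc by simp
  also have "\<dots> = Poly_Mapping.single (Poly_Mapping.single q 1 + Poly_Mapping.single q n) 1" unfolding Xv_def by (simp add: mult_single)
  also have "Poly_Mapping.single q 1 + Poly_Mapping.single q n = Poly_Mapping.single q (Suc n)" by (simp add: single_add[symmetric])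
  finally show ?case .
qed

lemma prod_single: "finite K \<Longrightarrow> (\<Prod>k\<in>K. Poly_Mapping.single (f k) (1::int)) = Poly_Mapping.single (\<Sum>k\<in>K. f k) 1"
  by (induction K rule: finite_induct) (simp_all add: mult_single)

lemma subst_of: "subst s (frag_of a) = (\<Prod>k\<in>Poly_Mapping.keys a. s k ^ Poly_Mapping.lookup a k)"
  unfolding subst_def by simp

lemma sum_dl:
  assumes "Poly_Mapping.lookup a p = 0"
  shows "(\<Sum>k\<in>Poly_Mapping.keys a. Poly_Mapping.single (if k < p then k else k - 1) (Poly_Mapping.lookup a k)) = dl p a"
proof (rule poly_mapping_eqI)
  fix q
  define t where "t = (if q < p then q else Suc q)"
  have "Poly_Mapping.lookup (\<Sum>k\<in>Poly_Mapping.keys a. Poly_Mapping.single (if k < p then k else k - 1) (Poly_Mapping.lookup a k)) q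
      = (\<Sum>k\<in>Poly_Mapping.keys a. (if k = t then Poly_Mapping.lookup a k else 0))"
    unfolding lookup_sum
  proof (rule sum.cong[OF refl])
    fix k assume k: "k \<in> Poly_Mapping.keys a"
    then have "k \<noteq> p" using assms by (auto simp: in_keys_iff)
    then have "((if k < p then k else k - 1) = q) = (k = t)" unfolding t_def by auto
    then show "Poly_Mapping.lookup (Poly_Mapping.single (if k < p then k else k - 1) (Poly_Mapping.lookup a k)) q = (if k = t then Poly_Mapping.lookup a k else 0)"
      by (auto simp: lookup_single when_def)
  qed
  also have "\<dots> = Poly_Mapping.lookup a t" by (simp add: in_keys_iff)
  also have "\<dots> = Poly_Mapping.lookup (dl p a) q" unfolding t_def by simp
  finally show "Poly_Mapping.lookup (\<Sum>k\<in>Poly_Mapping.keys a. Poly_Mapping.single (if k < p then k else k - 1) (Poly_Mapping.lookup a k)) q = Poly_Mapping.lookup (dl p a) q" .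
qed

lemma Rop_mono:
  assumes "1 \<le> i"
  shows "Rop i (frag_of a) = (if Poly_Mapping.lookup a (i - 1) = 0 then frag_of (dl (i - 1) a) else 0)"
proof -
  define p where "p = i - 1"
  define s where "s = (\<lambda>k. if k + 1 < i then xvar (k + 1) else if k + 1 = i then 0 else xvar k)"
  have s: "s k = (if k < p then Xv k else if k = p then 0 else Xv (k - 1))" for k
    unfolding s_def p_def xvar_def Xv_def using assms by auto
  have R: "Rop i (frag_of a) = (\<Prod>k\<in>Poly_Mapping.keys a. s k ^ Poly_Mapping.lookup a k)"
    unfolding Rop_def s_def[symmetric] by (rule subst_of)
  show ?thesis
  proof (cases "Poly_Mapping.lookup a p = 0")
    case False
    then have "p \<in> Poly_Mapping.keys a" by (simp add: in_keys_iff)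
    moreover have "s p ^ Poly_Mapping.lookup a p = 0" using False by (simp add: s)
    ultimately have "(\<Prod>k\<in>Poly_Mapping.keys a. s k ^ Poly_Mapping.lookup a k) = 0" by (intro prod_zero) auto
    then show ?thesis using R False p_def by simp
  next
    case True
    have "(\<Prod>k\<in>Poly_Mapping.keys a. s k ^ Poly_Mapping.lookup a k) = (\<Prod>k\<in>Poly_Mapping.keys a. Poly_Mapping.single (Poly_Mapping.single (if k < p then k else k - 1) (Poly_Mapping.lookup a k)) 1)"
    proof (rule prod.cong[OF refl])
      fix k assume "k \<in> Poly_Mapping.keys a"
      then have "k \<noteq> p" using True by (auto simp: in_keys_iff)
      then show "s k ^ Poly_Mapping.lookup a k = Poly_Mapping.single (Poly_Mapping.single (if k < p then k else k - 1) (Poly_Mapping.lookup a k)) 1"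
        by (simp add: s Xv_pow)
    qed
    also have "\<dots> = frag_of (dl p a)"
      by (simp add: prod_single sum_dl[OF True])
    finally show ?thesis using R True p_def by simp
  qed
qed

fun actc :: "letter \<Rightarrow> ex \<Rightarrow> int" where
  "actc (LR i) a = (if Poly_Mapping.lookup a (i - 1) = 0 then 1 else 0)"
| "actc (LT i) a = (if Poly_Mapping.lookup a (i - 1) \<noteq> 0 \<and> Poly_Mapping.lookup a i = 0 then 1
                     else if Poly_Mapping.lookup a (i - 1) = 0 \<and> Poly_Mapping.lookup a i \<noteq> 0 then -1 else 0)"

fun acte :: "letter \<Rightarrow> ex \<Rightarrow> ex" where
  "acte (LR i) a = dl (i - 1) a"
| "acte (LT i) a = mg (i - 1) a"

definition act :: "letter \<Rightarrow> ex \<Rightarrow> mpoly" where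
  "act X a = frag_cmul (actc X a) (frag_of (acte X a))"

lemma Rop_act: "1 \<le> i \<Longrightarrow> Rop i (frag_of a) = act (LR i) a"
  unfolding act_def by (simp add: Rop_mono)

lemma lin_Rop: "lin (Rop i)"
proof -
  have "Rop i = subst (\<lambda>k. if k + 1 < i then xvar (k + 1) else if k + 1 = i then 0 else xvar k)"
    by (rule ext) (simp add: Rop_def)
  then show ?thesis using lin_subst by simp
qed

lemma Xv_mult: "Xv p * frag_cmul c (frag_of g) = frag_cmul c (frag_of (Poly_Mapping.single p 1 + g))"
proof -
  have "Xv p * frag_of g = frag_of (Poly_Mapping.single p 1 + g)" unfolding Xv_def by (simp add: mult_single)
  then show ?thesis
    by (metis (no_types, lifting) mult.left_commute of_int_mult_cmul)
qed

lemma Top_mono_eq: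
  assumes "1 \<le> i"
  shows "Xv (i - 1) * act (LT i) a = Rop (i + 1) (frag_of a) - Rop i (frag_of a)"
proof -
  define p where "p = i - 1"
  have i: "i = Suc p" using assms p_def by simp
  have R1: "Rop (i + 1) (frag_of a) = (if Poly_Mapping.lookup a (Suc p) = 0 then frag_of (dl (Suc p) a) else 0)"
    using Rop_mono[of "i+1" a] i by simp
  have R0: "Rop i (frag_of a) = (if Poly_Mapping.lookup a p = 0 then frag_of (dl p a) else 0)"
    using Rop_mono[of i a] i by simp
  have L: "Xv (i - 1) * act (LT i) a = frag_cmul (actc (LT i) a) (frag_of (Poly_Mapping.single p 1 + mg p a))"
    unfolding act_def p_def by (simp add: Xv_mult)
  show ?thesis
  proof (cases "Poly_Mapping.lookup a p = 0")
    case A0: True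
    show ?thesis
    proof (cases "Poly_Mapping.lookup a (Suc p) = 0")
      case True
      have "dl (Suc p) a = dl p a"
        by (rule poly_mapping_eqI) (use A0 True in \<open>auto simp: not_less less_Suc_eq\<close>)
      then show ?thesis using L R1 R0 A0 True i by simp
    next
      case False
      have "Poly_Mapping.single p 1 + mg p a = dl p a"
        by (rule poly_mapping_eqI) (use A0 False in \<open>auto simp: lookup_add lookup_single when_def\<close>)
      then show ?thesis using L R1 R0 A0 False i by simp
    qed
  next
    case A1: False
    show ?thesis
    proof (cases "Poly_Mapping.lookup a (Suc p) = 0")
      case True
      have "Poly_Mapping.single p 1 + mg p a = dl (Suc p) a"
        by (rule poly_mapping_eqI) (use A1 True in \<open>auto simp: lookup_add lookup_single when_def less_Suc_eq\<close>)
      then show ?thesis using L R1 R0 A1 True i by simp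
    next
      case False
      then show ?thesis using L R1 R0 A1 False i by simp
    qed
  qed
qed

lemma Top_fe:
  assumes "1 \<le> i"
  shows "Top i f = frag_extend (act (LT i)) f"
proof -
  have xv: "xvar i = Xv (i - 1)" unfolding xvar_def Xv_def ..
  have ex: "Xv (i - 1) * frag_extend (act (LT i)) f = Rop (i + 1) f - Rop i f"
    using subset_UNIV
  proof (induction f rule: frag_induction)
    case zero
    then show ?case by (simp add: lin_zero[OF lin_Rop])
  next
    case (one x)
    then show ?case using Top_mono_eq[OF assms] by simp
  next
    case (diff a b)
    then show ?case
      by (simp add: frag_extend_diff lin_diff[OF lin_Rop] right_diff_distrib)
  qed
  have nz: "Xv (i - 1) \<noteq> 0" unfolding Xv_def by simp
  show ?thesis
    unfolding Top_def xv
  proof (rule the_equality)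
    show "Xv (i - 1) * frag_extend (act (LT i)) f = Rop (i + 1) f - Rop i f" by (rule ex)
  next
    fix g assume "Xv (i - 1) * g = Rop (i + 1) f - Rop i f"
    then have "Xv (i - 1) * g = Xv (i - 1) * frag_extend (act (LT i)) f" using ex by simp
    then show "g = frag_extend (act (LT i)) f" using nz by simp
  qed
qed

lemma opl_fe: "1 \<le> idx X \<Longrightarrow> opl X = frag_extend (act X)"
proof (cases X)
  case (LR i)
  assume "1 \<le> idx X"
  then have i: "1 \<le> i" using LR by simp
  show ?thesis
    using lin_Rop[of i] unfolding lin_def LR by (auto simp: Rop_act[OF i])
next
  case (LT i)
  assume "1 \<le> idx X"
  then show ?thesis using LT Top_fe by auto
qed

lemma lin_opl: "1 \<le> idx X \<Longrightarrow> lin (opl X)"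
  using opl_fe lin_frag_extend by metis

lemma opl_of: "1 \<le> idx X \<Longrightarrow> opl X (frag_of a) = act X a"
  using opl_fe by simp

lemma opl_cof: "1 \<le> idx X \<Longrightarrow> opl X (frag_cmul c (frag_of a)) = frag_cmul (c * actc X a) (frag_of (acte X a))"
  by (simp add: lin_cmul[OF lin_opl] opl_of act_def)

lemma the_eq: "th_equiv = equivclp th_step"
  unfolding th_equiv_def equivclp_def ..

lemma Phi_Nil: "Phi [] = id" unfolding Phi_def by simp
lemma Phi_Cons: "Phi (X # w) = opl X \<circ> Phi w" unfolding Phi_def by simp
lemma Phi_append: "Phi (u @ v) = Phi u \<circ> Phi v"
  by (induction u) (simp_all add: Phi_Nil Phi_Cons comp_assoc)

lemma valid_Cons: "valid_word (X # w) \<longleftrightarrow> 1 \<le> idx X \<and> valid_word w"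
  unfolding valid_word_def by simp

lemma lin_Phi: "valid_word w \<Longrightarrow> lin (Phi w)"
  by (induction w) (auto simp: Phi_Nil Phi_Cons valid_Cons lin_id intro!: lin_comp lin_opl)

lemma two_step:
  assumes "1 \<le> idx A" "1 \<le> idx B"
  shows "opl A (opl B (frag_of a)) = frag_cmul (actc B a * actc A (acte B a)) (frag_of (acte A (acte B a)))"
  using assms by (simp add: opl_of act_def opl_cof mult.commute)

lemma rel_eq:
  assumes A: "1 \<le> idx A" and B: "1 \<le> idx B" and C: "1 \<le> idx C" and D: "1 \<le> idx D"
    and c: "\<And>a. actc B a * actc A (acte B a) = actc D a * actc C (acte D a)"
    and e: "\<And>a. acte A (acte B a) = acte C (acte D a)"
  shows "opl A \<circ> opl B = opl C \<circ> opl D"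
proof (rule lin_eqI)
  show "lin (opl A \<circ> opl B)" "lin (opl C \<circ> opl D)" using assms by (simp_all add: lin_comp lin_opl)
  fix a
  show "(opl A \<circ> opl B) (frag_of a) = (opl C \<circ> opl D) (frag_of a)"
    using two_step[OF A B, of a] two_step[OF C D, of a] c[of a] e[of a] by simp
qed


lemma mgmg: assumes "j < i" shows "mg i (mg j a) = mg j (mg (Suc i) a)"
proof (rule poly_mapping_eqI)
  fix k show "Poly_Mapping.lookup (mg i (mg j a)) k = Poly_Mapping.lookup (mg j (mg (Suc i) a)) k"
    using assms by (cases "k < j"; cases "k = j"; cases "k < i"; cases "k = i"; cases "Suc k < i"; cases "Suc k = i") auto
qed
lemma mgdl: assumes "j \<le> i" shows "mg i (dl j a) = dl j (mg (Suc i) a)"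
proof (rule poly_mapping_eqI)
  fix k show "Poly_Mapping.lookup (mg i (dl j a)) k = Poly_Mapping.lookup (dl j (mg (Suc i) a)) k"
    using assms by (cases "k < j"; cases "k = j"; cases "k < i"; cases "k = i"; cases "Suc k < i"; cases "Suc k = i") auto
qed
lemma dlmg: assumes "j < i" shows "dl i (mg j a) = mg j (dl (Suc i) a)"
proof (rule poly_mapping_eqI)
  fix k show "Poly_Mapping.lookup (dl i (mg j a)) k = Poly_Mapping.lookup (mg j (dl (Suc i) a)) k"
    using assms by (cases "k < j"; cases "k = j"; cases "k < i"; cases "k = i"; cases "Suc k < i"; cases "Suc k = i") auto
qed
lemma dldl: assumes "j \<le> i" shows "dl i (dl j a) = dl j (dl (Suc i) a)"
proof (rule poly_mapping_eqI)
  fix k show "Poly_Mapping.lookup (dl i (dl j a)) k = Poly_Mapping.lookup (dl j (dl (Suc i) a)) k"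
    using assms by (cases "k < j"; cases "k = j"; cases "k < i"; cases "k = i"; cases "Suc k < i"; cases "Suc k = i") auto
qed

lemma rel_TT: assumes "1 \<le> j" "j < i" shows "opl (LT i) \<circ> opl (LT j) = opl (LT j) \<circ> opl (LT (i + 1))"
proof -
  define i' where "i' = i - 1"
  define j' where "j' = j - 1"
  have ij: "i = Suc i'" "j = Suc j'" "j' < i'" using assms unfolding i'_def j'_def by auto
  show ?thesis unfolding ij
    by (rule rel_eq) (use ij(3) in \<open>simp_all add: mult.commute mgmg\<close>)
qed
lemma rel_TR: assumes "1 \<le> j" "j \<le> i" shows "opl (LT i) \<circ> opl (LR j) = opl (LR j) \<circ> opl (LT (i + 1))"
proof -
  define i' where "i' = i - 1"
  define j' where "j' = j - 1"
  have ij: "i = Suc i'" "j = Suc j'" "j' \<le> i'" using assms unfolding i'_def j'_def by auto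
  show ?thesis unfolding ij
    by (rule rel_eq) (use ij(3) in \<open>simp_all add: mult.commute mgdl\<close>)
qed
lemma rel_RT: assumes "1 \<le> j" "j < i" shows "opl (LR i) \<circ> opl (LT j) = opl (LT j) \<circ> opl (LR (i + 1))"
proof -
  define i' where "i' = i - 1"
  define j' where "j' = j - 1"
  have ij: "i = Suc i'" "j = Suc j'" "j' < i'" using assms unfolding i'_def j'_def by auto
  show ?thesis unfolding ij
    by (rule rel_eq) (use ij(3) in \<open>simp_all add: mult.commute dlmg\<close>)
qed
lemma rel_RR: assumes "1 \<le> j" "j \<le> i" shows "opl (LR i) \<circ> opl (LR j) = opl (LR j) \<circ> opl (LR (i + 1))"
proof -
  define i' where "i' = i - 1"
  define j' where "j' = j - 1"
  have ij: "i = Suc i'" "j = Suc j'" "j' \<le> i'" using assms unfolding i'_def j'_def by auto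
  show ?thesis unfolding ij
    by (rule rel_eq) (use ij(3) in \<open>simp_all add: mult.commute dldl\<close>)
qed

lemma Phi_ctx: "Phi (u @ [A, B] @ v) = Phi u \<circ> (opl A \<circ> opl B) \<circ> Phi v"
  by (simp add: Phi_append Phi_Cons Phi_Nil comp_assoc)

lemma step_Phi: "th_step a b \<Longrightarrow> Phi a = Phi b"
proof (induction rule: th_step.induct)
  case (TT j i u v) then show ?case by (simp only: Phi_ctx rel_TT)
next
  case (TR j i u v) then show ?case by (simp only: Phi_ctx rel_TR)
next
  case (RT j i u v) then show ?case by (simp only: Phi_ctx rel_RT)
next
  case (RR j i u v) then show ?case by (simp only: Phi_ctx rel_RR)
qed

lemma equiv_Phi: "th_equiv a b \<Longrightarrow> Phi a = Phi b"
  unfolding the_eq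
  by (induction rule: equivclp_induct) (auto dest: step_Phi)

lemma th_trans [trans]: "th_equiv a b \<Longrightarrow> th_equiv b c \<Longrightarrow> th_equiv a c"
  unfolding the_eq by (rule equivclp_trans)
lemma th_sym: "th_equiv a b \<Longrightarrow> th_equiv b a"
  unfolding the_eq by (rule equivclp_sym)
lemma valid_Nil: "valid_word []" by (simp add: valid_word_def)

fun fits :: "nat \<Rightarrow> letter \<Rightarrow> bool" where
  "fits B (LR a) = (B < a)"
| "fits B (LT a) = (B \<le> a \<and> 1 \<le> a)"

fun chain :: "nat \<Rightarrow> letter list \<Rightarrow> bool" where
  "chain B [] = True"
| "chain B (X # w) = (fits B X \<and> chain (idx X) w)"

fun lastb :: "nat \<Rightarrow> letter list \<Rightarrow> nat" where
  "lastb B [] = B"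
| "lastb B (X # w) = lastb (idx X) w"

lemma fits_idx: "fits B X \<Longrightarrow> 1 \<le> idx X \<and> B \<le> idx X"
  by (cases X) auto

lemma chain_valid: "chain B w \<Longrightarrow> valid_word w"
  by (induction w arbitrary: B) (auto simp: valid_Cons valid_Nil dest: fits_idx)

lemma chain_snoc: "chain B (u @ [X]) \<longleftrightarrow> chain B u \<and> fits (lastb B u) X"
  by (induction u arbitrary: B) auto

lemma lastb_snoc: "lastb B (u @ [X]) = idx X"
  by (induction u arbitrary: B) auto

lemma chain_lastb: "chain B w \<Longrightarrow> B \<le> lastb B w"
  by (induction w arbitrary: B) (auto dest: fits_idx intro: le_trans)

fun bump :: "letter \<Rightarrow> letter" where
  "bump (LR i) = LR (Suc i)"
| "bump (LT i) = LT (Suc i)"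

definition okp :: "letter \<Rightarrow> letter \<Rightarrow> bool" where
  "okp X Y \<longleftrightarrow> idx X < idx Y \<or> (idx X = idx Y \<and> (\<exists>k. Y = LT k))"

fun ins :: "letter \<Rightarrow> letter list \<Rightarrow> letter list" where
  "ins X [] = [X]"
| "ins X (Y # r) = (if okp X Y then X # Y # r else Y # ins (bump X) r)"

fun nfz :: "letter list \<Rightarrow> letter list" where
  "nfz [] = []"
| "nfz (X # r) = ins X (nfz r)"

lemma ins_chain: "chain B r \<Longrightarrow> fits B X \<Longrightarrow> chain B (ins X r)"
proof (induction r arbitrary: B X)
  case Nil then show ?case by simp
next
  case (Cons Y r)
  show ?case
  proof (cases "okp X Y")
    case True
    have "fits (idx X) Y" using True Cons.prems by (cases X; cases Y) (auto simp: okp_def)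
    then show ?thesis using True Cons.prems by simp
  next
    case False
    have "fits (idx Y) (bump X)" using False by (cases X; cases Y) (auto simp: okp_def)
    then show ?thesis using False Cons by simp
  qed
qed

lemma step_cons: "th_step a b \<Longrightarrow> th_step (Y # a) (Y # b)"
proof (induction rule: th_step.induct)
  case (TT j i u v) then show ?case using th_step.TT[of j i "Y # u" v] by simp
next
  case (TR j i u v) then show ?case using th_step.TR[of j i "Y # u" v] by simp
next
  case (RT j i u v) then show ?case using th_step.RT[of j i "Y # u" v] by simp
next
  case (RR j i u v) then show ?case using th_step.RR[of j i "Y # u" v] by simp
qed

lemma equiv_cons: "th_equiv a b \<Longrightarrow> th_equiv (Y # a) (Y # b)"
  unfolding the_eq
proof (induction rule: equivclp_induct)
  case base then show ?case by simp
next
  case (step y z)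
  then show ?case by (meson equivclp_into_equivclp step_cons)
qed

lemma swap_step:
  assumes "\<not> okp X Y" "1 \<le> idx Y"
  shows "th_step (X # Y # r) (Y # bump X # r)"
proof (cases X)
  case (LR i)
  show ?thesis
  proof (cases Y)
    case (LR j) then show ?thesis using th_step.RR[of j i "[]" r] assms \<open>X = LR i\<close> by (auto simp: okp_def)
  next
    case (LT j) then show ?thesis using th_step.RT[of j i "[]" r] assms \<open>X = LR i\<close> by (auto simp: okp_def)
  qed
next
  case (LT i)
  show ?thesis
  proof (cases Y)
    case (LR j) then show ?thesis using th_step.TR[of j i "[]" r] assms \<open>X = LT i\<close> by (auto simp: okp_def)
  next
    case (LT j) then show ?thesis using th_step.TT[of j i "[]" r] assms \<open>X = LT i\<close> by (auto simp: okp_def)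
  qed
qed

lemma idx_bump: "idx (bump X) = Suc (idx X)" by (cases X) auto

lemma ins_equiv: "valid_word (X # r) \<Longrightarrow> th_equiv (X # r) (ins X r)"
proof (induction r arbitrary: X)
  case Nil then show ?case by (simp add: the_eq)
next
  case (Cons Y r)
  show ?case
  proof (cases "okp X Y")
    case True then show ?thesis by (simp add: the_eq)
  next
    case False
    have v: "1 \<le> idx Y" "valid_word (bump X # r)" using Cons.prems by (auto simp: valid_Cons idx_bump)
    have "th_equiv (X # Y # r) (Y # bump X # r)"
      unfolding the_eq using swap_step[OF False v(1)] by blast
    also have "th_equiv (Y # bump X # r) (Y # ins (bump X) r)"
      by (rule equiv_cons, rule Cons.IH, rule v(2))
    finally show ?thesis using False by simp
  qed
qed

lemma nfz: "valid_word w \<Longrightarrow> chain 0 (nfz w) \<and> th_equiv w (nfz w)"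
proof (induction w)
  case Nil then show ?case by (simp add: the_eq)
next
  case (Cons X r)
  then have X: "1 \<le> idx X" and r: "valid_word r" by (auto simp: valid_Cons)
  with Cons.IH have IH: "chain 0 (nfz r)" "th_equiv r (nfz r)" by auto
  have f: "fits 0 X" using X by (cases X) auto
  have c: "chain 0 (nfz (X # r))" using ins_chain[OF IH(1) f] by simp
  have "th_equiv (X # r) (X # nfz r)" by (rule equiv_cons[OF IH(2)])
  also have "th_equiv (X # nfz r) (ins X (nfz r))"
    by (rule ins_equiv) (use X chain_valid[OF IH(1)] in \<open>simp add: valid_Cons\<close>)
  finally show ?case using c by simp
qed

fun preL :: "letter \<Rightarrow> ex \<Rightarrow> ex" where
  "preL (LR i) g = iz (i - 1) g"
| "preL (LT i) g = sL (i - 1) g"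

fun preR :: "letter \<Rightarrow> ex \<Rightarrow> ex" where
  "preR (LR i) g = iz (i - 1) g"
| "preR (LT i) g = sR (i - 1) g"

lemma dl_iz: "dl p (iz p g) = g"
  by (rule poly_mapping_eqI) auto
lemma mg_sL: "mg p (sL p g) = g"
  by (rule poly_mapping_eqI) auto
lemma mg_sR: "mg p (sR p g) = g"
  by (rule poly_mapping_eqI) auto

lemma preL_ok: "1 \<le> idx X \<Longrightarrow> actc X (preL X g) = 1 \<and> acte X (preL X g) = g"
proof (cases X)
  case (LR i) then show ?thesis by (simp add: dl_iz)
next
  case (LT i)
  assume "1 \<le> idx X"
  then obtain p where "i = Suc p" using LT by (cases i) auto
  then show ?thesis using LT by (simp add: mg_sL)
qed

lemma preR_ok: "1 \<le> idx X \<Longrightarrow> actc X (preR X g) \<noteq> 0 \<and> acte X (preR X g) = g"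
proof (cases X)
  case (LR i) then show ?thesis by (simp add: dl_iz)
next
  case (LT i)
  assume "1 \<le> idx X"
  then obtain p where "i = Suc p" using LT by (cases i) auto
  then show ?thesis using LT by (simp add: mg_sR)
qed

fun bwd :: "(letter \<Rightarrow> ex \<Rightarrow> ex) \<Rightarrow> letter list \<Rightarrow> ex \<Rightarrow> ex" where
  "bwd P [] g = g"
| "bwd P (X # w) g = bwd P w (P X g)"

lemma bwd_snoc: "bwd P (u @ [X]) g = P X (bwd P u g)"
  by (induction u arbitrary: g) auto

lemma bwd_surv:
  assumes "valid_word w" "\<And>X g. 1 \<le> idx X \<Longrightarrow> actc X (P X g) \<noteq> 0 \<and> acte X (P X g) = g"
  shows "\<exists>c. c \<noteq> 0 \<and> Phi w (frag_of (bwd P w g)) = frag_cmul c (frag_of g)"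
  using assms(1)
proof (induction w arbitrary: g)
  case Nil then show ?case by (intro exI[of _ 1]) (simp add: Phi_Nil)
next
  case (Cons X w)
  then have X: "1 \<le> idx X" and w: "valid_word w" by (auto simp: valid_Cons)
  obtain c where c: "c \<noteq> 0" "Phi w (frag_of (bwd P w (P X g))) = frag_cmul c (frag_of (P X g))"
    using Cons.IH[OF w] by blast
  have "Phi (X # w) (frag_of (bwd P (X # w) g)) = opl X (frag_cmul c (frag_of (P X g)))"
    using c by (simp add: Phi_Cons)
  also have "\<dots> = frag_cmul (c * actc X (P X g)) (frag_of g)"
    using opl_cof[OF X] assms(2)[OF X] by simp
  finally show ?case using c(1) assms(2)[OF X] by (intro exI[of _ "c * actc X (P X g)"]) simp
qed

lemma surv_nz: "c \<noteq> 0 \<Longrightarrow> frag_cmul c (frag_of g) \<noteq> 0"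
  by simp

lemma ZR: "chain B w \<Longrightarrow> (\<forall>q. B \<le> q \<and> q < L \<longrightarrow> Poly_Mapping.lookup g q \<noteq> 0)
   \<Longrightarrow> (\<forall>q. lastb B w \<le> q \<and> q < L + length w \<longrightarrow> Poly_Mapping.lookup (bwd preR w g) q \<noteq> 0)"
proof (induction w arbitrary: B g L)
  case Nil then show ?case by simp
next
  case (Cons X w)
  have f: "fits B X" and c: "chain (idx X) w" using Cons.prems by auto
  have "\<forall>q. idx X \<le> q \<and> q < L + 1 \<longrightarrow> Poly_Mapping.lookup (preR X g) q \<noteq> 0"
  proof (cases X)
    case (LR a)
    show ?thesis
    proof (intro allI impI)
      fix q assume q: "idx X \<le> q \<and> q < L + 1"
      then have "B \<le> q - 1" "q - 1 < L" using f LR by auto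
      then have "Poly_Mapping.lookup g (q - 1) \<noteq> 0" using Cons.prems(2) by blast
      then show "Poly_Mapping.lookup (preR X g) q \<noteq> 0" using LR q f by auto
    qed
  next
    case (LT a)
    show ?thesis
    proof (intro allI impI)
      fix q assume q: "idx X \<le> q \<and> q < L + 1"
      show "Poly_Mapping.lookup (preR X g) q \<noteq> 0"
      proof (cases "q = a")
        case True then show ?thesis using LT q f by auto
      next
        case False
        then have "B \<le> q - 1" "q - 1 < L" using f LT q by auto
        then have "Poly_Mapping.lookup g (q - 1) \<noteq> 0" using Cons.prems(2) by blast
        then show ?thesis using LT q f False by auto
      qed
    qed
  qed
  from Cons.IH[OF c this] show ?case by simp
qed

lemma ZL: "chain B w \<Longrightarrow> (\<forall>q. B \<le> q \<longrightarrow> Poly_Mapping.lookup g q = 0)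
   \<Longrightarrow> (\<forall>q. lastb B w \<le> q \<longrightarrow> Poly_Mapping.lookup (bwd preL w g) q = 0)"
proof (induction w arbitrary: B g)
  case Nil then show ?case by simp
next
  case (Cons X w)
  have f: "fits B X" and c: "chain (idx X) w" using Cons.prems by auto
  have "\<forall>q. idx X \<le> q \<longrightarrow> Poly_Mapping.lookup (preL X g) q = 0"
  proof (cases X)
    case (LR a)
    then show ?thesis using f Cons.prems(2) by auto
  next
    case (LT a)
    then show ?thesis using f Cons.prems(2) by auto
  qed
  from Cons.IH[OF c this] show ?case by simp
qed

definition KR :: "(mpoly \<Rightarrow> mpoly) \<Rightarrow> nat \<Rightarrow> bool" where
  "KR F j \<longleftrightarrow> (\<forall>a. Poly_Mapping.lookup a j \<noteq> 0 \<longrightarrow> F (frag_of a) = 0)"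
definition KT :: "(mpoly \<Rightarrow> mpoly) \<Rightarrow> nat \<Rightarrow> bool" where
  "KT F j \<longleftrightarrow> (\<forall>a. Poly_Mapping.lookup a j = 0 \<and> Poly_Mapping.lookup a (Suc j) = 0 \<longrightarrow> F (frag_of a) = 0)"

fun Kl :: "(mpoly \<Rightarrow> mpoly) \<Rightarrow> letter \<Rightarrow> nat \<Rightarrow> bool" where
  "Kl F (LR i) j = KR F j"
| "Kl F (LT i) j = KT F j"

lemma Phi_snoc: "Phi (u @ [X]) = Phi u \<circ> opl X"
  by (simp add: Phi_append Phi_Cons Phi_Nil)

lemma D1:
  assumes "chain 0 (u @ [X])"
  shows "Kl (Phi (u @ [X])) X (idx X - 1)"
proof -
  have cu: "chain 0 u" and fx: "fits (lastb 0 u) X" using assms chain_snoc by auto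
  have X: "1 \<le> idx X" using fits_idx[OF fx] by simp
  have lu: "lin (Phi u)" using chain_valid[OF cu] by (rule lin_Phi)
  show ?thesis
  proof (cases X)
    case (LR m)
    have "Phi (u @ [X]) (frag_of a) = 0" if "Poly_Mapping.lookup a (m - 1) \<noteq> 0" for a
      using that X LR by (simp add: Phi_snoc Rop_act act_def lin_zero[OF lu])
    then show ?thesis using LR by (simp add: KR_def)
  next
    case (LT m)
    then obtain p where m: "m = Suc p" using X by (cases m) auto
    have o: "opl X (frag_of a) = 0" if "Poly_Mapping.lookup a p = 0" "Poly_Mapping.lookup a (Suc p) = 0" for a
      using opl_of[OF X, of a] that LT m by (simp add: act_def)
    have "Phi (u @ [X]) (frag_of a) = 0" if "Poly_Mapping.lookup a p = 0" "Poly_Mapping.lookup a (Suc p) = 0" for a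
      using o[OF that] by (simp add: Phi_snoc lin_zero[OF lu])
    then show ?thesis using LT m by (simp add: KT_def)
  qed
qed

lemma D2:
  assumes "chain 0 w" "lastb 0 w \<le> j"
  shows "\<not> Kl (Phi w) Y j"
proof -
  have v: "valid_word w" using chain_valid[OF assms(1)] .
  have nKR: "\<not> KR (Phi w) j"
  proof
    assume K: "KR (Phi w) j"
    define g0 :: ex where "g0 = Abs_poly_mapping (\<lambda>q. if q < Suc j then 1 else 0)"
    have g0: "Poly_Mapping.lookup g0 = (\<lambda>q. if q < Suc j then 1 else 0)"
      unfolding g0_def by (rule lookup_Abs_fin[of "{..<Suc j}"]) (auto split: if_splits)
    have "\<forall>q. lastb 0 w \<le> q \<and> q < Suc j + length w \<longrightarrow> Poly_Mapping.lookup (bwd preR w g0) q \<noteq> 0"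
      by (rule ZR[OF assms(1)]) (simp add: g0)
    then have "Poly_Mapping.lookup (bwd preR w g0) j \<noteq> 0" using assms(2) by auto
    then have "Phi w (frag_of (bwd preR w g0)) = 0" using K by (simp add: KR_def)
    moreover obtain c where "c \<noteq> 0" "Phi w (frag_of (bwd preR w g0)) = frag_cmul c (frag_of g0)"
      using bwd_surv[OF v preR_ok] by blast
    ultimately show False by simp
  qed
  have nKT: "\<not> KT (Phi w) j"
  proof
    assume K: "KT (Phi w) j"
    have "\<forall>q. lastb 0 w \<le> q \<longrightarrow> Poly_Mapping.lookup (bwd preL w 0) q = 0"
      by (rule ZL[OF assms(1)]) simp
    then have "Poly_Mapping.lookup (bwd preL w 0) j = 0" "Poly_Mapping.lookup (bwd preL w 0) (Suc j) = 0" using assms(2) by auto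
    then have "Phi w (frag_of (bwd preL w 0)) = 0" using K by (simp add: KT_def)
    moreover obtain c where "c \<noteq> 0" "Phi w (frag_of (bwd preL w 0)) = frag_cmul c (frag_of 0)"
      using bwd_surv[OF v, of preL] preL_ok by (metis zero_neq_one)
    ultimately show False by simp
  qed
  show ?thesis using nKR nKT by (cases Y) auto
qed

lemma D3:
  assumes "chain 0 (u @ [X])" "Kl (Phi (u @ [X])) Y (idx X - 1)" "idx Y = idx X"
  shows "Y = X"
proof -
  have cu: "chain 0 u" and fx: "fits (lastb 0 u) X" using assms chain_snoc by auto
  have X: "1 \<le> idx X" using fits_idx[OF fx] by simp
  have v: "valid_word (u @ [X])" using chain_valid[OF assms(1)] .
  define m where "m = idx X"
  define p where "p = m - 1"
  have m: "m = Suc p" using X unfolding p_def m_def by simp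
  define d where "d = bwd preL u 0"
  obtain c where c: "c \<noteq> 0" "Phi (u @ [X]) (frag_of (preL X d)) = frag_cmul c (frag_of 0)"
    using bwd_surv[OF v, of preL 0] preL_ok unfolding bwd_snoc d_def by (metis zero_neq_one)
  show ?thesis
  proof (cases X)
    case (LR a)
    have a: "a = Suc p" using LR m m_def by simp
    show ?thesis
    proof (cases Y)
      case (LR b) then show ?thesis using assms(3) \<open>X = LR a\<close> by simp
    next
      case (LT b)
      then have K: "KT (Phi (u @ [X])) p" using assms(2) m m_def by simp
      have "\<forall>q. lastb 0 u \<le> q \<longrightarrow> Poly_Mapping.lookup d q = 0" unfolding d_def by (rule ZL[OF cu]) simp
      moreover have "lastb 0 u \<le> p" using fx LR a by simp
      ultimately have "Poly_Mapping.lookup d p = 0" by simp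
      then have "Poly_Mapping.lookup (preL X d) p = 0" "Poly_Mapping.lookup (preL X d) (Suc p) = 0" using LR a by auto
      then have "Phi (u @ [X]) (frag_of (preL X d)) = 0" using K by (simp add: KT_def)
      then show ?thesis using c by simp
    qed
  next
    case (LT a)
    have a: "a = Suc p" using LT m m_def by simp
    show ?thesis
    proof (cases Y)
      case (LT b) then show ?thesis using assms(3) \<open>X = LT a\<close> by simp
    next
      case (LR b)
      then have K: "KR (Phi (u @ [X])) p" using assms(2) m m_def by simp
      have "Poly_Mapping.lookup (preL X d) p \<noteq> 0" using LT a by simp
      then have "Phi (u @ [X]) (frag_of (preL X d)) = 0" using K by (simp add: KR_def)
      then show ?thesis using c by simp
    qed
  qed
qed

lemma opl_surj: "1 \<le> idx X \<Longrightarrow> \<exists>f. opl X f = g"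
  using subset_UNIV
proof (induction g rule: frag_induction)
  case zero
  then show ?case using lin_zero[OF lin_opl] by blast
next
  case (one x)
  then show ?case using preL_ok[of X x] by (intro exI[of _ "frag_of (preL X x)"]) (simp add: opl_of act_def)
next
  case (diff a b)
  then obtain f1 f2 where "opl X f1 = a" "opl X f2 = b" by blast
  then show ?case using lin_diff[OF lin_opl[OF diff.prems]] by metis
qed

lemma cancel_opl: assumes "1 \<le> idx X" "F \<circ> opl X = G \<circ> opl X" shows "F = G"
proof
  fix g
  obtain f where "opl X f = g" using opl_surj[OF assms(1)] by blast
  then show "F g = G g" using fun_cong[OF assms(2), of f] by auto
qed

lemma uniq: "chain 0 w \<Longrightarrow> chain 0 w' \<Longrightarrow> Phi w = Phi w' \<Longrightarrow> w = w'"
proof (induction w arbitrary: w' rule: rev_induct)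
  case Nil
  show ?case
  proof (cases w' rule: rev_exhaust)
    case Nil then show ?thesis by simp
  next
    case (snoc u' X')
    have "Kl (Phi w') X' (idx X' - 1)" using D1 Nil.prems(2) snoc by simp
    moreover have "\<not> Kl (Phi []) X' (idx X' - 1)" by (rule D2) auto
    ultimately show ?thesis using Nil.prems(3) by simp
  qed
next
  case (snoc X u)
  show ?case
  proof (cases w' rule: rev_exhaust)
    case Nil
    have "Kl (Phi (u @ [X])) X (idx X - 1)" using D1 snoc.prems(1) by simp
    moreover have "\<not> Kl (Phi []) X (idx X - 1)" by (rule D2) auto
    ultimately show ?thesis using snoc.prems(3) Nil by simp
  next
    case (snoc u' X')
    note w' = this
    have K1: "Kl (Phi (u @ [X])) X (idx X - 1)" using D1 snoc.prems(1) by simp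
    have K2: "Kl (Phi (u @ [X])) X' (idx X' - 1)" using D1 snoc.prems(2,3) w' by simp
    have f1: "1 \<le> idx X" using snoc.prems(1) chain_snoc fits_idx by blast
    have f2: "1 \<le> idx X'" using snoc.prems(2) w' chain_snoc fits_idx by blast
    have "idx X = idx X'"
    proof (rule ccontr)
      assume "idx X \<noteq> idx X'"
      then consider "idx X < idx X'" | "idx X' < idx X" by linarith
      then show False
      proof cases
        case 1
        have "\<not> Kl (Phi (u @ [X])) X' (idx X' - 1)"
          by (rule D2) (use snoc.prems(1) 1 in \<open>auto simp: lastb_snoc\<close>)
        then show False using K2 by simp
      next
        case 2
        have "\<not> Kl (Phi (u' @ [X'])) X (idx X - 1)"
          by (rule D2) (use snoc.prems(2) w' 2 in \<open>auto simp: lastb_snoc\<close>)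
        then show False using K1 snoc.prems(3) w' by simp
      qed
    qed
    then have XX: "X' = X" using D3[OF snoc.prems(1)] K2 by simp
    have "Phi (u @ [X]) = Phi (u' @ [X])" using snoc.prems(3) w' XX by simp
    then have "Phi u \<circ> opl X = Phi u' \<circ> opl X" by (simp only: Phi_snoc)
    then have "Phi u = Phi u'" by (rule cancel_opl[OF f1])
    moreover have "chain 0 u" "chain 0 u'" using snoc.prems(1,2) w' chain_snoc by auto
    ultimately have "u = u'" using snoc.IH by blast
    then show ?thesis using w' XX by simp
  qed
qed

theorem mainTheorem4:
  assumes "valid_word \<Omega>" and "valid_word \<Omega>'"
  shows "Phi \<Omega> = Phi \<Omega>' \<longleftrightarrow> th_equiv \<Omega> \<Omega>'"
proof
  assume "Phi \<Omega> = Phi \<Omega>'"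
  then have "Phi (nfz \<Omega>) = Phi (nfz \<Omega>')"
    using equiv_Phi nfz assms by metis
  then have "nfz \<Omega> = nfz \<Omega>'" using uniq nfz assms by blast
  then show "th_equiv \<Omega> \<Omega>'" using nfz[OF assms(1)] nfz[OF assms(2)] th_sym th_trans by metis
next
  assume "th_equiv \<Omega> \<Omega>'"
  then show "Phi \<Omega> = Phi \<Omega>'" by (rule equiv_Phi)
qed

end
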